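(* Let $N\geq1$, let $\mathcal{H}_{X_1},\dots,\mathcal{H}_{X_N}$ be finite-dimensional Hilbert spaces and let $\rho=|V\rangle\langle V|$ be a pure state on $\mathcal{H}_{X_1}\otimes\cdots\otimes\mathcal{H}_{X_N}$. For each $i$, let $\lambda^i_1\geq\lambda^i_2\geq\cdots$ be the eigenvalues of the reduced state $\rho_{X_i}$ in decreasing order and $|e^i_1\rangle,|e^i_2\rangle,\dots$ a corresponding orthonormal eigenbasis of $\mathcal{H}_{X_i}$ (so $\langle e^i_a|\rho_{X_i}|e^i_b\rangle=\lambda^i_a\delta_{ab}$). Write $|V\rangle=\sum_{x_1,\dots,x_N}V_{x_1\dots x_N}|e^1_{x_1}\rangle\otimes\cdots\otimes|e^N_{x_N}\rangle$, and set $\epsilon_i=1-\lambda^i_1$ and $\varepsilon=\sum_{i=1}^N\epsilon_i$. Then $$|V_{1\dots1}|^2\geq 1-\varepsilon.$$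
   Context: $\rho_{X_i}$ denotes the partial trace of $\rho$ over all tensor factors except $\mathcal{H}_{X_i}$. $V_{1\dots1}$ is the coefficient of $|e^1_1\rangle\otimes\cdots\otimes|e^N_1\rangle$. *)

theory Defs
  imports "HOL-Analysis.Analysis"
begin

text \<open>Concrete model: H_{X_i} = C^(d i) for i < N (0-based indices), with its standard
basis. A vector of the tensor product is a function on index tuples
x \<in> PiE {..<N} (\<lambda>i. {..<d i}), giving the coefficient in the standard product basis.\<close>

definition tuples :: "nat \<Rightarrow> (nat \<Rightarrow> nat) \<Rightarrow> (nat \<Rightarrow> nat) set" where
  "tuples N d = PiE {..<N} (\<lambda>i. {..<d i})"

text \<open>Matrix entry (a,b) of the reduced state rho_{X_i} = Tr_{all but i} |V><V|,
in the standard basis of C^(d i).\<close>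
definition reduced_state ::
  "nat \<Rightarrow> (nat \<Rightarrow> nat) \<Rightarrow> ((nat \<Rightarrow> nat) \<Rightarrow> complex) \<Rightarrow> nat \<Rightarrow> nat \<Rightarrow> nat \<Rightarrow> complex" where
  "reduced_state N d V i a b =
     (\<Sum>(x, y) \<in> {(x, y). x \<in> tuples N d \<and> y \<in> tuples N d \<and> x i = a \<and> y i = b \<and>
                          (\<forall>j<N. j \<noteq> i \<longrightarrow> x j = y j)}.
        V x * cnj (V y))"

definition orthonormal_basis_fin :: "nat \<Rightarrow> (nat \<Rightarrow> nat \<Rightarrow> complex) \<Rightarrow> bool" where
  "orthonormal_basis_fin n e \<longleftrightarrow>
     (\<forall>k<n. \<forall>l<n. (\<Sum>a<n. cnj (e k a) * e l a) = (if k = l then 1 else 0))"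

definition product_coeff ::
  "nat \<Rightarrow> (nat \<Rightarrow> nat) \<Rightarrow> (nat \<Rightarrow> nat \<Rightarrow> nat \<Rightarrow> complex) \<Rightarrow> ((nat \<Rightarrow> nat) \<Rightarrow> complex)
    \<Rightarrow> (nat \<Rightarrow> nat) \<Rightarrow> complex" where
  "product_coeff N d e V k =
     (\<Sum>x \<in> tuples N d. (\<Prod>i<N. cnj (e i (k i) (x i))) * V x)"

end

theory Submission
  imports Defs "Jordan_Normal_Form.Determinant"
begin

lemma rows_orth:
  assumes "orthonormal_basis_fin n e" "a < n" "b < n"
  shows "(\<Sum>k<n. cnj (e k a) * e k b) = (if a = b then 1 else 0)"
proof -
  define A where "A = mat n n (\<lambda>(k,a). cnj (e k a))"
  define B where "B = mat n n (\<lambda>(a,l). e l a)"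
  have A: "A \<in> carrier_mat n n" and B: "B \<in> carrier_mat n n" unfolding A_def B_def by auto
  have "A * B = 1\<^sub>m n"
  proof (rule eq_matI)
    fix i j assume ij: "i < dim_row (1\<^sub>m n :: complex mat)" "j < dim_col (1\<^sub>m n :: complex mat)"
    then have "(A * B) $$ (i,j) = (\<Sum>a<n. cnj (e i a) * e j a)"
      unfolding A_def B_def by (auto simp: scalar_prod_def intro!: sum.cong)
    also have "\<dots> = (if i = j then 1 else 0)" using assms(1) ij unfolding orthonormal_basis_fin_def by auto
    finally show "(A * B) $$ (i,j) = 1\<^sub>m n $$ (i,j)" using ij by simp
  qed (auto simp: A_def B_def)
  then have "B * A = 1\<^sub>m n" using mat_mult_left_right_inverse[OF A B] by blast
  then have "(B * A) $$ (a,b) = (if a = b then 1 else 0)" using assms by simp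
  moreover have "(B * A) $$ (a,b) = (\<Sum>k<n. e k a * cnj (e k b))"
    using assms unfolding A_def B_def by (auto simp: scalar_prod_def intro!: sum.cong)
  ultimately have "(\<Sum>k<n. e k a * cnj (e k b)) = (if a = b then 1 else 0)" by simp
  then have "cnj (\<Sum>k<n. e k a * cnj (e k b)) = (if a = b then 1 else 0)" by simp
  then show ?thesis by (simp add: mult.commute)
qed

lemma mid_if: "c * (if P then A else 0) * (b::complex) = (if P then c * A * b else 0)"
  by simp

lemma swap3:
  "(\<Sum>k\<in>P. \<Sum>x\<in>X. \<Sum>y\<in>Y. f k x y) = (\<Sum>x\<in>X. \<Sum>y\<in>Y. \<Sum>k\<in>P. f k x y)"
proof -
  have "(\<Sum>k\<in>P. \<Sum>x\<in>X. \<Sum>y\<in>Y. f k x y) = (\<Sum>x\<in>X. \<Sum>k\<in>P. \<Sum>y\<in>Y. f k x y)"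
    by (rule sum.swap)
  also have "\<dots> = (\<Sum>x\<in>X. \<Sum>y\<in>Y. \<Sum>k\<in>P. f k x y)"
    by (intro sum.cong refl sum.swap)
  finally show ?thesis .
qed

lemma swap4:
  "(\<Sum>a\<in>A. \<Sum>b\<in>B. \<Sum>x\<in>X. \<Sum>y\<in>Y. f a b x y) = (\<Sum>x\<in>X. \<Sum>y\<in>Y. \<Sum>a\<in>A. \<Sum>b\<in>B. f a b x y)"
proof -
  have "(\<Sum>a\<in>A. \<Sum>b\<in>B. \<Sum>x\<in>X. \<Sum>y\<in>Y. f a b x y) = (\<Sum>a\<in>A. \<Sum>x\<in>X. \<Sum>b\<in>B. \<Sum>y\<in>Y. f a b x y)"
    by (intro sum.cong refl sum.swap)
  also have "\<dots> = (\<Sum>x\<in>X. \<Sum>a\<in>A. \<Sum>b\<in>B. \<Sum>y\<in>Y. f a b x y)" by (rule sum.swap)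
  also have "\<dots> = (\<Sum>x\<in>X. \<Sum>a\<in>A. \<Sum>y\<in>Y. \<Sum>b\<in>B. f a b x y)" by (intro sum.cong refl sum.swap)
  also have "\<dots> = (\<Sum>x\<in>X. \<Sum>y\<in>Y. \<Sum>a\<in>A. \<Sum>b\<in>B. f a b x y)" by (intro sum.cong refl sum.swap)
  finally show ?thesis .
qed

lemma pair_sum:
  assumes "finite K"
  shows "(\<Sum>(x, y) \<in> {(x, y). x \<in> K \<and> y \<in> K \<and> Q x y}. f x y) =
         (\<Sum>x\<in>K. \<Sum>y\<in>K. if Q x y then f x y else 0)"
proof -
  have "{(x, y). x \<in> K \<and> y \<in> K \<and> Q x y} = {p \<in> K \<times> K. Q (fst p) (snd p)}" by auto
  then have "(\<Sum>(x, y) \<in> {(x, y). x \<in> K \<and> y \<in> K \<and> Q x y}. f x y) =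
     (\<Sum>p\<in>K \<times> K. if Q (fst p) (snd p) then f (fst p) (snd p) else 0)"
    using assms by (simp add: sum.inter_filter case_prod_beta)
  also have "\<dots> = (\<Sum>x\<in>K. \<Sum>y\<in>K. if Q x y then f x y else 0)"
    by (simp add: sum.cartesian_product case_prod_beta)
  finally show ?thesis .
qed

lemma prod_ind:
  "(\<Prod>j\<in>I. (if P j then 1 else 0::complex)) = (if \<forall>j\<in>I. P j then 1 else 0)" if "finite I"
  using that by (induct I rule: finite_induct) auto

lemma sum_sq_W:
  assumes "\<And>j. j < N \<Longrightarrow> finite (A j)"
  shows "(\<Sum>k\<in>PiE {..<N} A. complex_of_real ((cmod (product_coeff N d e V k))\<^sup>2)) =
    (\<Sum>x\<in>tuples N d. \<Sum>y\<in>tuples N d. V x * cnj (V y) *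
        (\<Prod>j<N. \<Sum>a\<in>A j. cnj (e j a (x j)) * e j a (y j)))"
proof -
  let ?K = "tuples N d"
  have "(\<Sum>k\<in>PiE {..<N} A. complex_of_real ((cmod (product_coeff N d e V k))\<^sup>2)) =
     (\<Sum>k\<in>PiE {..<N} A. \<Sum>x\<in>?K. \<Sum>y\<in>?K. V x * cnj (V y) *
        (\<Prod>j<N. cnj (e j (k j) (x j)) * e j (k j) (y j)))"
    apply (rule sum.cong[OF refl])
    unfolding complex_norm_square product_coeff_def
    by (simp add: sum_product cnj_sum cnj_prod prod.distrib mult_ac)
  also have "\<dots> = (\<Sum>x\<in>?K. \<Sum>y\<in>?K. \<Sum>k\<in>PiE {..<N} A. V x * cnj (V y) *
        (\<Prod>j<N. cnj (e j (k j) (x j)) * e j (k j) (y j)))"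
    by (rule swap3)
  also have "\<dots> = (\<Sum>x\<in>?K. \<Sum>y\<in>?K. V x * cnj (V y) *
        (\<Prod>j<N. \<Sum>a\<in>A j. cnj (e j a (x j)) * e j a (y j)))"
    apply (intro sum.cong refl)
    apply (subst prod_sum_PiE)
    using assms by (auto simp: sum_distrib_left)
  finally show ?thesis .
qed

theorem lemma1:
  fixes N :: nat and d :: "nat \<Rightarrow> nat"
    and V :: "(nat \<Rightarrow> nat) \<Rightarrow> complex"
    and e :: "nat \<Rightarrow> nat \<Rightarrow> nat \<Rightarrow> complex"
    and lam :: "nat \<Rightarrow> nat \<Rightarrow> real"
  assumes "N \<ge> 1"
    and "\<forall>i<N. d i \<ge> 1"
    and "(\<Sum>x \<in> tuples N d. (cmod (V x))\<^sup>2) = 1"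
    and "\<forall>i<N. orthonormal_basis_fin (d i) (e i)"
    and "\<forall>i<N. \<forall>k<d i. \<forall>a<d i.
           (\<Sum>b<d i. reduced_state N d V i a b * e i k b) = complex_of_real (lam i k) * e i k a"
    and "\<forall>i<N. \<forall>k l. k \<le> l \<and> l < d i \<longrightarrow> lam i l \<le> lam i k"
  shows "(cmod (product_coeff N d e V (\<lambda>_. 0)))\<^sup>2 \<ge> 1 - (\<Sum>i<N. 1 - lam i 0)"
proof -
  define K where "K = tuples N d"
  define q where "q k = (cmod (product_coeff N d e V k))\<^sup>2" for k
  have finK: "finite K" unfolding K_def tuples_def by (simp add: finite_PiE)
  have Kmem: "x \<in> K \<Longrightarrow> j < N \<Longrightarrow> x j < d j" for x j
    unfolding K_def tuples_def by (auto simp: PiE_iff)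
  have Keq: "x \<in> K \<Longrightarrow> y \<in> K \<Longrightarrow> (\<forall>j<N. x j = y j) \<longleftrightarrow> x = y" for x y
    unfolding K_def tuples_def by (auto simp: PiE_iff extensional_def fun_eq_iff) (metis not_le)
  have rows: "i < N \<Longrightarrow> a < d i \<Longrightarrow> b < d i \<Longrightarrow>
      (\<Sum>k<d i. cnj (e i k a) * e i k b) = (if a = b then 1 else 0)" for i a b
    using rows_orth assms(4) by blast
  have P: "(\<Sum>k\<in>K. q k) = 1"
  proof -
    have "(\<Sum>k\<in>K. complex_of_real (q k)) =
      (\<Sum>x\<in>K. \<Sum>y\<in>K. V x * cnj (V y) * (\<Prod>j<N. \<Sum>a<d j. cnj (e j a (x j)) * e j a (y j)))"
      unfolding q_def K_def using sum_sq_W[of N "\<lambda>j. {..<d j}" d e V]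
      by (simp add: tuples_def)
    also have "\<dots> = (\<Sum>x\<in>K. \<Sum>y\<in>K. V x * cnj (V y) * (if x = y then 1 else 0))"
    proof (intro sum.cong refl)
      fix x y assume xy: "x \<in> K" "y \<in> K"
      have "(\<Prod>j<N. \<Sum>a<d j. cnj (e j a (x j)) * e j a (y j)) = (\<Prod>j<N. if x j = y j then 1 else 0)"
        using rows Kmem xy by (intro prod.cong refl) auto
      also have "\<dots> = (if x = y then 1 else 0)" using prod_ind[of "{..<N}"] Keq[OF xy] by auto
      finally show "V x * cnj (V y) * (\<Prod>j<N. \<Sum>a<d j. cnj (e j a (x j)) * e j a (y j)) =
          V x * cnj (V y) * (if x = y then 1 else 0)" by simp
    qed
    also have "\<dots> = (\<Sum>x\<in>K. \<Sum>y\<in>K. if x = y then V x * cnj (V y) else 0)"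
      by (intro sum.cong refl) simp
    also have "\<dots> = (\<Sum>x\<in>K. V x * cnj (V x))"
      using finK by (simp add: sum.delta')
    also have "\<dots> = complex_of_real (\<Sum>x\<in>K. (cmod (V x))\<^sup>2)"
      unfolding of_real_sum by (simp add: complex_norm_square del: of_real_power)
    also have "\<dots> = 1" using assms(3) K_def by simp
    finally show ?thesis by (metis of_real_eq_1_iff of_real_sum)
  qed
  have B: "lam i 0 = (\<Sum>k\<in>K. if k i = 0 then q k else 0)" if iN: "i < N" for i
  proof -
    let ?e = "e i 0"
    have di: "0 < d i" using assms(2) iN by auto
    define rho where "rho a b = reduced_state N d V i a b" for a b
    define ag where "ag x y = (\<forall>j<N. j \<noteq> i \<longrightarrow> x j = y j)" for x y :: "nat \<Rightarrow> nat"
    have "complex_of_real (lam i 0) = (\<Sum>a<d i. cnj (?e a) * (complex_of_real (lam i 0) * ?e a))"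
      using assms(4) iN di unfolding orthonormal_basis_fin_def
      by (simp add: sum_distrib_left[symmetric] mult_ac)
    also have "\<dots> = (\<Sum>a<d i. cnj (?e a) * (\<Sum>b<d i. rho a b * ?e b))"
      using assms(5) iN di unfolding rho_def by (intro sum.cong refl) auto
    also have "\<dots> = (\<Sum>a<d i. \<Sum>b<d i. \<Sum>x\<in>K. \<Sum>y\<in>K.
        cnj (?e a) * (if x i = a \<and> y i = b \<and> ag x y then V x * cnj (V y) else 0) * ?e b)"
      unfolding rho_def reduced_state_def K_def[symmetric] ag_def
      by (simp add: pair_sum[OF finK] sum_distrib_left sum_distrib_right mult_ac)
    also have "\<dots> = (\<Sum>x\<in>K. \<Sum>y\<in>K. \<Sum>a<d i. \<Sum>b<d i.
        cnj (?e a) * (if x i = a \<and> y i = b \<and> ag x y then V x * cnj (V y) else 0) * ?e b)"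
      by (rule swap4)
    also have "\<dots> = (\<Sum>x\<in>K. \<Sum>y\<in>K. V x * cnj (V y) *
        (if ag x y then cnj (?e (x i)) * ?e (y i) else 0))"
    proof (intro sum.cong refl)
      fix x y assume xy: "x \<in> K" "y \<in> K"
      have "(\<Sum>a<d i. \<Sum>b<d i.
        cnj (?e a) * (if x i = a \<and> y i = b \<and> ag x y then V x * cnj (V y) else 0) * ?e b)
        = (\<Sum>a<d i. if a = x i then (\<Sum>b<d i. if b = y i then
              (if ag x y then cnj (?e a) * (V x * cnj (V y)) * ?e b else 0) else 0) else 0)"
        apply (rule sum.cong[OF refl])
        subgoal for a by (cases "a = x i") (auto simp: mid_if sum.delta')
        done
      also have "\<dots> = (if ag x y then cnj (?e (x i)) * (V x * cnj (V y)) * ?e (y i) else 0)"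
        using Kmem[OF xy(1) iN] Kmem[OF xy(2) iN] by (simp only: sum.delta finite_lessThan) simp
      finally show "(\<Sum>a<d i. \<Sum>b<d i.
        cnj (?e a) * (if x i = a \<and> y i = b \<and> ag x y then V x * cnj (V y) else 0) * ?e b)
        = V x * cnj (V y) * (if ag x y then cnj (?e (x i)) * ?e (y i) else 0)" by simp
    qed
    also have "\<dots> = (\<Sum>x\<in>K. \<Sum>y\<in>K. V x * cnj (V y) *
        (\<Prod>j<N. \<Sum>a\<in>(if j = i then {0} else {..<d j}). cnj (e j a (x j)) * e j a (y j)))"
    proof (intro sum.cong refl)
      fix x y assume xy: "x \<in> K" "y \<in> K"
      have iin: "i \<in> {..<N}" using iN by simp
      have "(\<Prod>j<N. \<Sum>a\<in>(if j = i then {0} else {..<d j}). cnj (e j a (x j)) * e j a (y j))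
          = (\<Sum>a\<in>(if i = i then {0} else {..<d i}). cnj (e i a (x i)) * e i a (y i)) *
            (\<Prod>j\<in>{..<N} - {i}. \<Sum>a\<in>(if j = i then {0} else {..<d j}). cnj (e j a (x j)) * e j a (y j))"
        by (rule prod.remove[OF finite_lessThan iin])
      also have "(\<Sum>a\<in>(if i = i then {0} else {..<d i}). cnj (e i a (x i)) * e i a (y i)) =
          cnj (?e (x i)) * ?e (y i)" by simp
      also have "(\<Prod>j\<in>{..<N} - {i}. \<Sum>a\<in>(if j = i then {0} else {..<d j}). cnj (e j a (x j)) * e j a (y j))
          = (\<Prod>j\<in>{..<N} - {i}. if x j = y j then 1 else 0)"
        using rows Kmem xy by (intro prod.cong refl) auto
      also have "\<dots> = (if ag x y then 1 else 0)"
        using prod_ind[of "{..<N} - {i}"] unfolding ag_def by auto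
      finally show "V x * cnj (V y) * (if ag x y then cnj (?e (x i)) * ?e (y i) else 0) =
        V x * cnj (V y) * (\<Prod>j<N. \<Sum>a\<in>(if j = i then {0} else {..<d j}). cnj (e j a (x j)) * e j a (y j))"
        by simp
    qed
    also have "\<dots> = (\<Sum>k\<in>PiE {..<N} (\<lambda>j. if j = i then {0} else {..<d j}). complex_of_real (q k))"
      unfolding q_def K_def by (rule sum_sq_W[symmetric]) auto
    also have "PiE {..<N} (\<lambda>j. if j = i then {0} else {..<d j}) = {k\<in>K. k i = 0}"
    proof (rule equalityI; rule subsetI)
      fix k assume k: "k \<in> PiE {..<N} (\<lambda>j. if j = i then {0} else {..<d j})"
      have "PiE {..<N} (\<lambda>j. if j = i then {0} else {..<d j}) \<subseteq> K"
        unfolding K_def tuples_def by (rule PiE_mono) (use di in auto)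
      moreover have "k i \<in> {0}" using PiE_mem[OF k, of i] iN by simp
      ultimately show "k \<in> {k\<in>K. k i = 0}" using k by auto
    next
      fix k assume k: "k \<in> {k\<in>K. k i = 0}"
      then have "k \<in> PiE {..<N} (\<lambda>j. {..<d j})" "k i = 0" unfolding K_def tuples_def by auto
      then show "k \<in> PiE {..<N} (\<lambda>j. if j = i then {0} else {..<d j})"
        unfolding PiE_iff by auto
    qed
    also have "(\<Sum>k\<in>{k\<in>K. k i = 0}. complex_of_real (q k)) =
        (\<Sum>k\<in>K. if k i = 0 then complex_of_real (q k) else 0)"
      by (rule sum.inter_filter[OF finK])
    also have "\<dots> = complex_of_real (\<Sum>k\<in>K. if k i = 0 then q k else 0)"
      unfolding of_real_sum by (intro sum.cong refl) simp
    finally have "complex_of_real (lam i 0) = complex_of_real (\<Sum>k\<in>K. if k i = 0 then q k else 0)" .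
    then show ?thesis by (simp only: of_real_eq_iff)
  qed
  define k0 where "k0 = restrict (\<lambda>_. 0::nat) {..<N}"
  have k0K: "k0 \<in> K" unfolding k0_def K_def tuples_def using assms(2) by auto
  have qk0: "q k0 = (cmod (product_coeff N d e V (\<lambda>_. 0)))\<^sup>2"
  proof -
    have "(\<Prod>j<N. cnj (e j (k0 j) (x j))) = (\<Prod>j<N. cnj (e j 0 (x j)))" for x
      by (rule prod.cong) (auto simp: k0_def)
    then show ?thesis unfolding q_def product_coeff_def by simp
  qed
  have qnn: "q k \<ge> 0" for k unfolding q_def by simp
  have "(\<Sum>i<N. 1 - lam i 0) = (\<Sum>i<N. \<Sum>k\<in>K. if k i = 0 then 0 else q k)"
  proof (intro sum.cong refl)
    fix i assume "i \<in> {..<N}"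
    then have "1 - lam i 0 = (\<Sum>k\<in>K. q k) - (\<Sum>k\<in>K. if k i = 0 then q k else 0)" using B P by simp
    also have "\<dots> = (\<Sum>k\<in>K. q k - (if k i = 0 then q k else 0))"
      by (rule sum_subtractf[symmetric])
    also have "\<dots> = (\<Sum>k\<in>K. if k i = 0 then 0 else q k)"
      by (rule sum.cong) auto
    finally show "1 - lam i 0 = (\<Sum>k\<in>K. if k i = 0 then 0 else q k)" .
  qed
  also have "\<dots> = (\<Sum>k\<in>K. \<Sum>i<N. if k i = 0 then 0 else q k)" by (rule sum.swap)
  also have "\<dots> \<ge> (\<Sum>k\<in>K. if k = k0 then 0 else q k)"
  proof (rule sum_mono)
    fix k assume kK: "k \<in> K"
    show "(if k = k0 then 0 else q k) \<le> (\<Sum>i<N. if k i = 0 then 0 else q k)"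
    proof (cases "k = k0")
      case True then show ?thesis using qnn by (simp add: sum_nonneg)
    next
      case False
      then obtain i where i: "i < N" "k i \<noteq> 0"
        using Keq[OF kK k0K] unfolding k0_def by auto
      have "q k = (if k i = 0 then 0 else q k)" using i by simp
      also have "\<dots> \<le> (\<Sum>i<N. if k i = 0 then 0 else q k)"
        by (rule member_le_sum[of i "{..<N}" "\<lambda>i. if k i = 0 then 0 else q k"]) (use i qnn in auto)
      finally show ?thesis using False by simp
    qed
  qed
  moreover have "(\<Sum>k\<in>K. if k = k0 then 0 else q k) = 1 - q k0"
  proof -
    have "(\<Sum>k\<in>K. if k = k0 then 0 else q k) = (\<Sum>k\<in>K. q k - (if k = k0 then q k else 0))"
      by (rule sum.cong) auto
    also have "\<dots> = (\<Sum>k\<in>K. q k) - (\<Sum>k\<in>K. if k = k0 then q k else 0)"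
      by (rule sum_subtractf)
    also have "\<dots> = 1 - q k0" using P finK k0K by (simp add: sum.delta')
    finally show ?thesis .
  qed
  ultimately show ?thesis using qk0 by linarith
qed

end
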